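(* Let $S\subset\mathbb{P}^6$ be the surface defined by $$x_1^2-x_2x_4=x_1x_5-x_3x_4=x_1x_3-x_2x_5=x_1x_6-x_3x_5=x_2x_6-x_3^2=x_4x_6-x_5^2=0,$$ $$x_1^2+x_1x_4+x_5x_7=x_1x_2+x_1^2+x_3x_7=x_1x_3+x_1x_5+x_6x_7=0,$$ let $U\subset S$ be the complement in $S$ of the three lines $x_1=x_2=x_3=x_5=x_6=0$, $x_1=x_3=x_4=x_5=x_6=0$, and $x_3=x_5=x_6=x_1+x_4=x_1+x_2=0$, and let $N_U(B)=\#\{x\in U(\mathbb{Q}):H(x)\leq B\}$. For $s_0\in\mathbb{R}$, $\mathbf{s}=(s_1,s_2,s_3)$, $\mathbf{y}=(y_1,y_2,y_3)\in\mathbb{R}^3$ define $$\Psi(s_0,\mathbf{s},\mathbf{y})=\max\{|s_0^3s_1^2s_2^2s_3^2|,\ |y_1y_2y_3|,\ |s_0s_1^2y_1^2|,\ |s_0s_2^2y_2^2|\}.$$ Then $$N_U(B)=2\,\#\left\{(s_0,\mathbf{s},\mathbf{y})\in\mathbb{Z}^7:\ \begin{array}{l}\Psi(s_0,\mathbf{s},\mathbf{y})\leq B,\ \ s_1y_1-s_2y_2+s_3y_3=0,\\ s_0,s_1,s_2,s_3,y_1>0,\\ \gcd(y_i,s_0s_js_k)=1,\ \gcd(s_i,s_j)=1\end{array}\right\}+O(B),$$ where in the coprimality conditions $\{i,j,k\}$ runs over all permutations of $\{1,2,3\}$.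
   Context: For $x\in\mathbb{P}^{6}(\mathbb{Q})$ written as $x=[\mathbf{x}]$ with $\mathbf{x}\in\mathbb{Z}^7$ primitive, $H(x)=\max_i|x_i|$. The $O$-constant is absolute; $B\geq 1$. *)

theory Defs
  imports Complex_Main
begin

text \<open>Integer vectors in Z^7 are represented as functions nat => int, supported on {1..7}
  (coordinate x_i is x i).\<close>

definition vec7 :: "(nat \<Rightarrow> int) \<Rightarrow> bool" where
  "vec7 x \<longleftrightarrow> (\<forall>i. i \<notin> {1..7} \<longrightarrow> x i = 0)"

definition primitive7 :: "(nat \<Rightarrow> int) \<Rightarrow> bool" where
  "primitive7 x \<longleftrightarrow> (\<forall>d::int. (\<forall>i\<in>{1..7}. d dvd x i) \<longrightarrow> \<bar>d\<bar> = 1)"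

definition height7 :: "(nat \<Rightarrow> int) \<Rightarrow> int" where
  "height7 x = Max ((\<lambda>i. \<bar>x i\<bar>) ` {1..7})"

definition on_S :: "(nat \<Rightarrow> int) \<Rightarrow> bool" where
  "on_S x \<longleftrightarrow>
     x 1 ^ 2 - x 2 * x 4 = 0 \<and> x 1 * x 5 - x 3 * x 4 = 0 \<and> x 1 * x 3 - x 2 * x 5 = 0 \<and>
     x 1 * x 6 - x 3 * x 5 = 0 \<and> x 2 * x 6 - x 3 ^ 2 = 0 \<and> x 4 * x 6 - x 5 ^ 2 = 0 \<and>
     x 1 ^ 2 + x 1 * x 4 + x 5 * x 7 = 0 \<and> x 1 * x 2 + x 1 ^ 2 + x 3 * x 7 = 0 \<and>
     x 1 * x 3 + x 1 * x 5 + x 6 * x 7 = 0"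

definition on_lines :: "(nat \<Rightarrow> int) \<Rightarrow> bool" where
  "on_lines x \<longleftrightarrow>
     (x 1 = 0 \<and> x 2 = 0 \<and> x 3 = 0 \<and> x 5 = 0 \<and> x 6 = 0) \<or>
     (x 1 = 0 \<and> x 3 = 0 \<and> x 4 = 0 \<and> x 5 = 0 \<and> x 6 = 0) \<or>
     (x 3 = 0 \<and> x 5 = 0 \<and> x 6 = 0 \<and> x 1 + x 4 = 0 \<and> x 1 + x 2 = 0)"

text \<open>Rational points of U of height at most B; a point of P^6(Q) is identified with the
  pair {x, -x} of its primitive integer representatives.\<close>
definition N_U :: "real \<Rightarrow> nat" where
  "N_U B = card {{x, -x} | x. vec7 x \<and> primitive7 x \<and> on_S x \<and> \<not> on_lines x
                            \<and> real_of_int (height7 x) \<le> B}"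

definition Psi :: "int \<Rightarrow> int \<Rightarrow> int \<Rightarrow> int \<Rightarrow> int \<Rightarrow> int \<Rightarrow> int \<Rightarrow> int" where
  "Psi s0 s1 s2 s3 y1 y2 y3 = Max {\<bar>s0^3 * s1^2 * s2^2 * s3^2\<bar>, \<bar>y1 * y2 * y3\<bar>,
                                   \<bar>s0 * s1^2 * y1^2\<bar>, \<bar>s0 * s2^2 * y2^2\<bar>}"

definition count_set :: "real \<Rightarrow> (int \<times> int \<times> int \<times> int \<times> int \<times> int \<times> int) set" where
  "count_set B = {(s0, s1, s2, s3, y1, y2, y3).
      real_of_int (Psi s0 s1 s2 s3 y1 y2 y3) \<le> B \<and>
      s1 * y1 - s2 * y2 + s3 * y3 = 0 \<and>
      s0 > 0 \<and> s1 > 0 \<and> s2 > 0 \<and> s3 > 0 \<and> y1 > 0 \<and>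
      gcd y1 (s0 * s2 * s3) = 1 \<and> gcd y2 (s0 * s1 * s3) = 1 \<and> gcd y3 (s0 * s1 * s2) = 1 \<and>
      gcd s1 s2 = 1 \<and> gcd s1 s3 = 1 \<and> gcd s2 s3 = 1}"

end

theory Submission
  imports Defs "HOL-Computational_Algebra.Primes"
begin

lemma realmax_le:
  assumes "finite (S::int set)" "S \<noteq> {}"
  shows "real_of_int (Max S) \<le> B \<longleftrightarrow> (\<forall>s\<in>S. real_of_int s \<le> B)"
proof
  assume "real_of_int (Max S) \<le> B" then show "\<forall>s\<in>S. real_of_int s \<le> B"
    using Max_ge[OF assms(1)] by (meson of_int_le_iff order_trans)
next
  assume "\<forall>s\<in>S. real_of_int s \<le> B" then show "real_of_int (Max S) \<le> B"
    using Max_in[OF assms] by blast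
qed

lemma height_le: "real_of_int (height7 x) \<le> B \<longleftrightarrow> (\<forall>i\<in>{1..7}. real_of_int \<bar>x i\<bar> \<le> B)"
  unfolding height7_def by (subst realmax_le) simp_all

lemma abs_le_height: "i \<in> {1..7} \<Longrightarrow> \<bar>x i\<bar> \<le> height7 x"
  unfolding height7_def by (rule Max_ge) auto

lemma Psi_le: "real_of_int (Psi s0 s1 s2 s3 y1 y2 y3) \<le> B \<longleftrightarrow>
   real_of_int \<bar>s0^3 * s1^2 * s2^2 * s3^2\<bar> \<le> B \<and> real_of_int \<bar>y1 * y2 * y3\<bar> \<le> B \<and>
   real_of_int \<bar>s0 * s1^2 * y1^2\<bar> \<le> B \<and> real_of_int \<bar>s0 * s2^2 * y2^2\<bar> \<le> B"
  unfolding Psi_def by (subst realmax_le) simp_all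

lemma sq_bound:
  fixes a b c :: int
  assumes "a^2 = b*c" "real_of_int \<bar>b\<bar> \<le> B" "real_of_int \<bar>c\<bar> \<le> B"
  shows "real_of_int \<bar>a\<bar> \<le> B"
proof -
  have i: "\<bar>a\<bar>^2 = \<bar>b\<bar>*\<bar>c\<bar>" unfolding abs_mult[symmetric] assms(1)[symmetric] by simp
  have "real_of_int \<bar>a\<bar> ^ 2 = real_of_int \<bar>b\<bar> * real_of_int \<bar>c\<bar>"
    using arg_cong[OF i, of real_of_int] by simp
  also have "\<dots> \<le> B * B" using assms(2,3) by (intro mult_mono) auto
  finally have "real_of_int \<bar>a\<bar> ^ 2 \<le> B ^ 2" by (simp add: power2_eq_square)
  moreover have "0 \<le> real_of_int \<bar>b\<bar>" by simp
  then have "B \<ge> 0" using assms(2) by linarith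
  ultimately show ?thesis using power2_le_imp_le by blast
qed

lemma x6_nonzero:
  assumes "on_S x" "\<not> on_lines x"
  shows "x 6 \<noteq> 0"
proof
  assume h: "x 6 = 0"
  have "x 3 = 0" using assms(1) h unfolding on_S_def by (simp add: power2_eq_square)
  moreover have "x 5 = 0" using assms(1) h unfolding on_S_def by (simp add: power2_eq_square)
  ultimately have e1: "x 1 * (x 1 + x 4) = 0" "x 1 * (x 1 + x 2) = 0" "x 1 * x 1 = x 2 * x 4"
    using assms(1) unfolding on_S_def by (auto simp: power2_eq_square algebra_simps)
  show False
  proof (cases "x 1 = 0")
    case True
    then have "x 2 * x 4 = 0" using e1(3) by simp
    then have "x 2 = 0 \<or> x 4 = 0" by simp
    then show ?thesis using True assms(2) \<open>x 3 = 0\<close> \<open>x 5 = 0\<close> h unfolding on_lines_def by blast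
  next
    case False
    have "x 1 + x 4 = 0" using e1(1) False mult_eq_0_iff by blast
    moreover have "x 1 + x 2 = 0" using e1(2) False mult_eq_0_iff by blast
    ultimately have "x 1 + x 4 = 0" "x 1 + x 2 = 0" by simp_all
    then show ?thesis using assms(2) \<open>x 3 = 0\<close> \<open>x 5 = 0\<close> h unfolding on_lines_def by blast
  qed
qed

definition negv :: "(nat \<Rightarrow> int) \<Rightarrow> nat \<Rightarrow> int" where "negv x = (\<lambda>i. - x i)"

lemma neg_inv:
  shows "vec7 (-x) = vec7 x" "primitive7 (-x) = primitive7 x" "on_S (-x) = on_S x"
    "on_lines (-x) = on_lines x" "height7 (-x) = height7 x"
proof -
  show "vec7 (-x) = vec7 x" unfolding vec7_def by simp
  show "primitive7 (-x) = primitive7 x" unfolding primitive7_def by simp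
  show "on_S (-x) = on_S x" unfolding on_S_def power2_eq_square by (simp add: mult_minus_left mult_minus_right)
  show "on_lines (-x) = on_lines x" unfolding on_lines_def by (simp; linarith)
  show "height7 (-x) = height7 x" unfolding height7_def by simp
qed

definition sig :: "(nat \<Rightarrow> int) \<Rightarrow> nat \<Rightarrow> int" where
  "sig x = (\<lambda>i. if i = 3 \<or> i = 5 \<or> i = 7 then - x i else x i)"

lemma sig_sig: "sig (sig x) = x" unfolding sig_def by auto

lemma sig_inv:
  shows "vec7 (sig x) = vec7 x" "primitive7 (sig x) = primitive7 x" "on_S (sig x) = on_S x"
    "on_lines (sig x) = on_lines x" "height7 (sig x) = height7 x"
  "sig x 6 = x 6" "sig x 3 = - x 3"
proof -
  show "vec7 (sig x) = vec7 x" unfolding vec7_def sig_def by auto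
  have "\<And>d i. (d dvd sig x i) \<longleftrightarrow> (d dvd x i)"
    by (simp add: sig_def)
  then show "primitive7 (sig x) = primitive7 x" unfolding primitive7_def by simp
  have e: "sig x 1 = x 1" "sig x 2 = x 2" "sig x 3 = - x 3" "sig x 4 = x 4" "sig x 5 = - x 5"
     "sig x 6 = x 6" "sig x 7 = - x 7" by (simp_all add: sig_def)
  show "on_S (sig x) = on_S x" unfolding on_S_def e power2_eq_square mult_minus_left mult_minus_right minus_mult_minus
    by (intro conj_cong; linarith)
  show "on_lines (sig x) = on_lines x" unfolding on_lines_def sig_def by auto
  have "(\<lambda>i. \<bar>sig x i\<bar>) = (\<lambda>i. \<bar>x i\<bar>)" unfolding sig_def by auto
  then show "height7 (sig x) = height7 x" unfolding height7_def by metis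
  show "sig x 6 = x 6" "sig x 3 = - x 3" unfolding sig_def by auto
qed



definition Fv :: "int \<Rightarrow> int \<Rightarrow> int \<Rightarrow> int \<Rightarrow> int \<Rightarrow> int \<Rightarrow> int \<Rightarrow> nat \<Rightarrow> int" where
  "Fv s0 s1 s2 s3 y1 y2 y3 = (\<lambda>i. if i = 1 then - (s0*s1*s2*y1*y2)
     else if i = 2 then s0*s1^2*y1^2
     else if i = 3 then s0^2*s1^2*s2*s3*y1
     else if i = 4 then s0*s2^2*y2^2
     else if i = 5 then - (s0^2*s1*s2^2*s3*y2)
     else if i = 6 then s0^3*s1^2*s2^2*s3^2
     else if i = 7 then - (y1*y2*y3) else 0)"

lemma Fv_simps:
  "Fv s0 s1 s2 s3 y1 y2 y3 1 = - (s0*s1*s2*y1*y2)"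
  "Fv s0 s1 s2 s3 y1 y2 y3 2 = s0*s1^2*y1^2"
  "Fv s0 s1 s2 s3 y1 y2 y3 3 = s0^2*s1^2*s2*s3*y1"
  "Fv s0 s1 s2 s3 y1 y2 y3 4 = s0*s2^2*y2^2"
  "Fv s0 s1 s2 s3 y1 y2 y3 5 = - (s0^2*s1*s2^2*s3*y2)"
  "Fv s0 s1 s2 s3 y1 y2 y3 6 = s0^3*s1^2*s2^2*s3^2"
  "Fv s0 s1 s2 s3 y1 y2 y3 7 = - (y1*y2*y3)"
  by (simp_all add: Fv_def)

lemma Fv_vec7: "vec7 (Fv s0 s1 s2 s3 y1 y2 y3)"
  unfolding vec7_def Fv_def by auto

lemma Fv_onS:
  assumes "s1 * y1 - s2 * y2 + s3 * y3 = 0"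
  shows "on_S (Fv s0 s1 s2 s3 y1 y2 y3)"
proof -
  let ?r = "s1 * y1 - s2 * y2 + s3 * y3"
  let ?x = "Fv s0 s1 s2 s3 y1 y2 y3"
  have a: "(?x 1)^2 - ?x 2 * ?x 4 = 0" "?x 1 * ?x 5 - ?x 3 * ?x 4 = 0" "?x 1 * ?x 3 - ?x 2 * ?x 5 = 0"
     "?x 1 * ?x 6 - ?x 3 * ?x 5 = 0" "?x 2 * ?x 6 - (?x 3)^2 = 0" "?x 4 * ?x 6 - (?x 5)^2 = 0"
    unfolding Fv_simps by algebra+
  have b1: "(?x 1)^2 + ?x 1 * ?x 4 + ?x 5 * ?x 7 = s0^2*s1*s2^2*y1*y2^2 * ?r"
    unfolding Fv_simps by algebra
  have b2: "?x 1 * ?x 2 + (?x 1)^2 + ?x 3 * ?x 7 = - (s0^2*s1^2*s2*y1^2*y2 * ?r)"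
    unfolding Fv_simps by algebra
  have b3: "?x 1 * ?x 3 + ?x 1 * ?x 5 + ?x 6 * ?x 7 = - (s0^3*s1^2*s2^2*s3*y1*y2 * ?r)"
    unfolding Fv_simps by algebra
  show ?thesis unfolding on_S_def using a b1 b2 b3 assms by simp
qed

lemma ball17: "(\<forall>i\<in>{1..7::nat}. P i) \<longleftrightarrow> (P 1 \<and> P 2 \<and> P 3 \<and> P 4 \<and> P 5 \<and> P 6 \<and> P 7)"
proof -
  have "{1..7::nat} = {1,2,3,4,5,6,7}" by auto
  then show ?thesis by simp
qed

lemma Fv_height:
  "real_of_int (height7 (Fv s0 s1 s2 s3 y1 y2 y3)) \<le> B \<longleftrightarrow>
   real_of_int (Psi s0 s1 s2 s3 y1 y2 y3) \<le> B"
proof -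
  let ?x = "Fv s0 s1 s2 s3 y1 y2 y3"
  have e1: "(?x 1)^2 = ?x 2 * ?x 4" unfolding Fv_simps by algebra
  have e3: "(?x 3)^2 = ?x 2 * ?x 6" unfolding Fv_simps by algebra
  have e5: "(?x 5)^2 = ?x 4 * ?x 6" unfolding Fv_simps by algebra
  have a7: "\<bar>?x 7\<bar> = \<bar>y1*y2*y3\<bar>" unfolding Fv_simps by simp
  show ?thesis unfolding height_le ball17 Psi_le
    using sq_bound[OF e1, of B] sq_bound[OF e3, of B] sq_bound[OF e5, of B] a7
    unfolding Fv_simps by auto
qed

lemma coprime_prime_not:
  fixes p a b :: int
  assumes "gcd a b = 1" "prime p" "p dvd a" "p dvd b" shows False
  using assms by (metis coprime_common_divisor coprime_iff_gcd_eq_1 not_prime_unit)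

lemma Fv_primitive:
  assumes "s0 > 0" "s1 > 0" "s2 > 0" "s3 > 0"
    "gcd y1 (s0 * s2 * s3) = 1" "gcd y2 (s0 * s1 * s3) = 1" "gcd y3 (s0 * s1 * s2) = 1"
  shows "primitive7 (Fv s0 s1 s2 s3 y1 y2 y3)"
  unfolding primitive7_def
proof (intro allI impI)
  fix d :: int
  let ?x = "Fv s0 s1 s2 s3 y1 y2 y3"
  assume h: "\<forall>i\<in>{1..7}. d dvd ?x i"
  then have h2: "d dvd ?x 2" and h4: "d dvd ?x 4" and h6: "d dvd ?x 6" and h7: "d dvd ?x 7"
    unfolding ball17 by auto
  have x6: "?x 6 \<noteq> 0" unfolding Fv_simps using assms by simp
  show "\<bar>d\<bar> = 1"
  proof (rule ccontr)
    assume "\<bar>d\<bar> \<noteq> 1"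
    moreover have "d \<noteq> 0" using h6 x6 by auto
    ultimately obtain p where p: "prime p" "p dvd d"
      using prime_divisor_exists[of d] by auto
    have P2: "p dvd s0 \<or> p dvd s1 \<or> p dvd y1"
      using dvd_trans[OF p(2) h2] p(1) unfolding Fv_simps power2_eq_square
      by (auto simp: prime_dvd_mult_iff)
    have P4: "p dvd s0 \<or> p dvd s2 \<or> p dvd y2"
      using dvd_trans[OF p(2) h4] p(1) unfolding Fv_simps power2_eq_square
      by (auto simp: prime_dvd_mult_iff)
    have P6: "p dvd s0 \<or> p dvd s1 \<or> p dvd s2 \<or> p dvd s3"
      using dvd_trans[OF p(2) h6] p(1) unfolding Fv_simps power2_eq_square power3_eq_cube
      by (auto simp: prime_dvd_mult_iff)
    have P7: "p dvd y1 \<or> p dvd y2 \<or> p dvd y3"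
      using dvd_trans[OF p(2) h7] p(1) unfolding Fv_simps
      by (auto simp: prime_dvd_mult_iff)
    have C1: "p dvd y1 \<Longrightarrow> \<not> (p dvd s0 \<or> p dvd s2 \<or> p dvd s3)"
      using coprime_prime_not[OF assms(5) p(1)] by (auto simp: dvd_mult)
    have C2: "p dvd y2 \<Longrightarrow> \<not> (p dvd s0 \<or> p dvd s1 \<or> p dvd s3)"
      using coprime_prime_not[OF assms(6) p(1)] by (auto simp: dvd_mult)
    have C3: "p dvd y3 \<Longrightarrow> \<not> (p dvd s0 \<or> p dvd s1 \<or> p dvd s2)"
      using coprime_prime_not[OF assms(7) p(1)] by (auto simp: dvd_mult)
    show False using P2 P4 P6 P7 C1 C2 C3 by blast
  qed
qed



definition good :: "int \<Rightarrow> int \<Rightarrow> int \<Rightarrow> int \<Rightarrow> int \<Rightarrow> int \<Rightarrow> int \<Rightarrow> bool" where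
  "good s0 s1 s2 s3 y1 y2 y3 \<longleftrightarrow>
      s1 * y1 - s2 * y2 + s3 * y3 = 0 \<and>
      s0 > 0 \<and> s1 > 0 \<and> s2 > 0 \<and> s3 > 0 \<and> y1 > 0 \<and>
      gcd y1 (s0 * s2 * s3) = 1 \<and> gcd y2 (s0 * s1 * s3) = 1 \<and> gcd y3 (s0 * s1 * s2) = 1 \<and>
      gcd s1 s2 = 1 \<and> gcd s1 s3 = 1 \<and> gcd s2 s3 = 1"

lemma count_set_alt: "count_set B = {(s0, s1, s2, s3, y1, y2, y3).
      real_of_int (Psi s0 s1 s2 s3 y1 y2 y3) \<le> B \<and> good s0 s1 s2 s3 y1 y2 y3}"
  unfolding count_set_def good_def by simp

definition Gabc :: "int \<Rightarrow> int \<Rightarrow> int \<Rightarrow> int \<times> int \<times> int \<times> int \<times> int \<times> int \<times> int" where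
  "Gabc a b c = (c div (gcd a c * gcd b c * gcd (a+b) c), gcd a c, gcd b c, gcd (a+b) c,
      a div gcd a c, - (b div gcd b c), - ((a+b) div gcd (a+b) c))"

lemma coprime_from_triple:
  fixes a b c u v :: int
  assumes "gcd a (gcd b c) = 1" "u dvd c" "v dvd c" "\<And>d. d dvd u \<Longrightarrow> d dvd v \<Longrightarrow> d dvd a \<and> d dvd b"
  shows "coprime u v"
proof (rule coprimeI)
  fix d assume "d dvd u" "d dvd v"
  then have "d dvd a" "d dvd b" "d dvd c" using assms(4) dvd_trans[OF _ assms(2)] by auto
  then have "d dvd gcd a (gcd b c)" by simp
  then show "is_unit d" using assms(1) by simp
qed

lemma Gabc_props:
  fixes a b c :: int
  assumes g: "gcd a (gcd b c) = 1" and c: "c > 0" and a: "a > 0"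
  obtains s0 s1 s2 s3 y1 y2 y3 where "Gabc a b c = (s0, s1, s2, s3, y1, y2, y3)"
    "good s0 s1 s2 s3 y1 y2 y3" "c = s0*s1*s2*s3" "a = s1*y1" "b = - (s2*y2)"
proof -
  define s1 where "s1 = gcd a c"
  define s2 where "s2 = gcd b c"
  define s3 where "s3 = gcd (a+b) c"
  define s0 where "s0 = c div (s1*s2*s3)"
  define y1 where "y1 = a div s1"
  define y2 where "y2 = - (b div s2)"
  define y3 where "y3 = - ((a+b) div s3)"
  have G: "Gabc a b c = (s0, s1, s2, s3, y1, y2, y3)"
    unfolding Gabc_def s0_def s1_def s2_def s3_def y1_def y2_def y3_def by simp
  have pos: "s1 > 0" "s2 > 0" "s3 > 0" using c unfolding s1_def s2_def s3_def by auto
  have d1: "s1 dvd a" "s1 dvd c" "s2 dvd b" "s2 dvd c" "s3 dvd a + b" "s3 dvd c"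
    unfolding s1_def s2_def s3_def by auto
  have c12: "coprime s1 s2"
    by (rule coprime_from_triple[OF g d1(2) d1(4)]) (use d1 in \<open>meson dvd_trans\<close>)
  have c13: "coprime s1 s3"
  proof (rule coprime_from_triple[OF g d1(2) d1(6)])
    fix d assume "d dvd s1" "d dvd s3"
    then have "d dvd a" "d dvd a + b" using d1 dvd_trans by blast+
    then show "d dvd a \<and> d dvd b" by (metis add_diff_cancel_left' dvd_diff)
  qed
  have c23: "coprime s2 s3"
  proof (rule coprime_from_triple[OF g d1(4) d1(6)])
    fix d assume "d dvd s2" "d dvd s3"
    then have "d dvd b" "d dvd a + b" using d1 dvd_trans by blast+
    then show "d dvd a \<and> d dvd b" by (metis add_diff_cancel_right' dvd_diff)
  qed
  have "s1 * s2 dvd c" using divides_mult[OF d1(2) d1(4) c12] .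
  moreover have "coprime (s1*s2) s3" using c13 c23 by simp
  ultimately have "s1 * s2 * s3 dvd c" using divides_mult d1(6) by blast
  then have "c = s0 * (s1*s2*s3)" unfolding s0_def by simp
  then have cs: "c = s0*s1*s2*s3" by (simp add: ac_simps)
  have s0p: "s0 > 0" using cs c pos by (metis mult_pos_pos zero_less_mult_pos2 mult.commute)
  have as: "a = s1*y1" unfolding y1_def using d1(1) by simp
  have bs: "b = - (s2*y2)" unfolding y2_def using d1(3) by simp
  have abs': "a + b = - (s3*y3)" unfolding y3_def using d1(5) by simp
  have y1p: "y1 > 0" using as a pos(1) by (simp add: zero_less_mult_iff)
  have lin: "s1 * y1 - s2 * y2 + s3 * y3 = 0" using as bs abs' by simp
  have cd1: "c div s1 = s0*s2*s3" using cs pos by (simp add: algebra_simps)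
  have cd2: "c div s2 = s0*s1*s3" using cs pos by (simp add: algebra_simps)
  have cd3: "c div s3 = s0*s1*s2" using cs pos by (simp add: algebra_simps)
  have "coprime (a div s1) (c div s1)" unfolding s1_def using c by (intro div_gcd_coprime) simp
  then have g1: "gcd y1 (s0*s2*s3) = 1" unfolding y1_def cd1 by simp
  have "coprime (b div s2) (c div s2)" unfolding s2_def using c by (intro div_gcd_coprime) simp
  then have g2: "gcd y2 (s0*s1*s3) = 1" unfolding y2_def cd2 by simp
  have "coprime ((a+b) div s3) (c div s3)" unfolding s3_def using c by (intro div_gcd_coprime) simp
  then have g3: "gcd y3 (s0*s1*s2) = 1" unfolding y3_def cd3 by simp
  have "good s0 s1 s2 s3 y1 y2 y3" unfolding good_def
    using lin s0p pos y1p g1 g2 g3 c12 c13 c23 by (simp add: coprime_iff_gcd_eq_1)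
  then show ?thesis using that G cs as bs by blast
qed

lemma gcd_mult_pos: "(k::int) > 0 \<Longrightarrow> gcd (k*m) (k*n) = k * gcd m n"
  by (metis abs_of_pos gcd_mult_distrib_int)

lemma good_triple:
  assumes "good s0 s1 s2 s3 y1 y2 y3"
  shows "gcd (s1*y1) (gcd (- (s2*y2)) (s0*s1*s2*s3)) = 1"
    "Gabc (s1*y1) (- (s2*y2)) (s0*s1*s2*s3) = (s0, s1, s2, s3, y1, y2, y3)"
proof -
  note A = assms[unfolded good_def]
  have gA: "gcd (s1*y1) (s0*s1*s2*s3) = s1"
  proof -
    have "gcd (s1*y1) (s0*s1*s2*s3) = gcd (s1*y1) (s1*(s0*s2*s3))" by (simp add: algebra_simps)
    also have "\<dots> = s1 * gcd y1 (s0*s2*s3)" using A by (intro gcd_mult_pos) auto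
    finally show ?thesis using A by simp
  qed
  have gB: "gcd (- (s2*y2)) (s0*s1*s2*s3) = s2"
  proof -
    have "gcd (- (s2*y2)) (s0*s1*s2*s3) = gcd (s2*y2) (s2*(s0*s1*s3))" by (simp add: algebra_simps)
    also have "\<dots> = s2 * gcd y2 (s0*s1*s3)" using A by (intro gcd_mult_pos) auto
    finally show ?thesis using A by simp
  qed
  have ab: "s1*y1 + - (s2*y2) = - (s3*y3)" using A by simp
  have gC: "gcd (s1*y1 + - (s2*y2)) (s0*s1*s2*s3) = s3"
  proof -
    have "gcd (s1*y1 + - (s2*y2)) (s0*s1*s2*s3) = gcd (s3*y3) (s3*(s0*s1*s2))" unfolding ab by (simp add: algebra_simps)
    also have "\<dots> = s3 * gcd y3 (s0*s1*s2)" using A by (intro gcd_mult_pos) auto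
    finally show ?thesis using A by simp
  qed
  have cop: "coprime s1 (- (s2*y2))"
  proof -
    have "coprime s1 s2" using A by (simp add: coprime_iff_gcd_eq_1)
    moreover have "coprime y2 (s0*s1*s3)" using A by (simp add: coprime_iff_gcd_eq_1)
    then have "coprime s1 y2" by (simp add: coprime_commute)
    ultimately show ?thesis by simp
  qed
  have "gcd (s1*y1) (gcd (- (s2*y2)) (s0*s1*s2*s3)) = gcd (gcd (s1*y1) (s0*s1*s2*s3)) (- (s2*y2))"
    by (metis gcd.assoc gcd.commute)
  also have "\<dots> = 1" unfolding gA using cop by (simp add: coprime_iff_gcd_eq_1)
  finally show "gcd (s1*y1) (gcd (- (s2*y2)) (s0*s1*s2*s3)) = 1" .
  show "Gabc (s1*y1) (- (s2*y2)) (s0*s1*s2*s3) = (s0, s1, s2, s3, y1, y2, y3)"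
  proof -
    have e1: "s0 * s1 * s2 * s3 div (s1 * s2 * s3) = s0" using A by simp
    have e2: "s1 * y1 div s1 = y1" using A by simp
    have e3: "- (- (s2 * y2) div s2) = y2"
    proof -
      have nz: "s2 \<noteq> 0" using A by simp
      have "s2 * (- y2) div s2 = - y2" using nz by (rule nonzero_mult_div_cancel_left)
      then show ?thesis by (simp only: mult_minus_right minus_minus)
    qed
    have e4: "- ((s1 * y1 + - (s2 * y2)) div s3) = y3"
    proof -
      have nz: "s3 \<noteq> 0" using A by simp
      have "s3 * (- y3) div s3 = - y3" using nz by (rule nonzero_mult_div_cancel_left)
      then show ?thesis unfolding ab by (simp only: mult_minus_right minus_minus)
    qed
    show ?thesis unfolding Gabc_def gA gB gC e1 e2 e3 e4 by simp
  qed
qed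



lemma cancel_eq: "(U::int) \<noteq> 0 \<Longrightarrow> U * p = W \<Longrightarrow> U * q = W \<Longrightarrow> p = q"
  by auto

lemma onS_facts:
  assumes "on_S x"
  shows "x 1 * x 6 = x 3 * x 5" "x 2 * x 6 = (x 3)^2" "x 4 * x 6 = (x 5)^2"
    "x 1 * x 3 + x 1 * x 5 + x 6 * x 7 = 0"
  using assms unfolding on_S_def by auto

lemma prop_eq:
  assumes S: "on_S x" "on_S x'" and V: "vec7 x" "vec7 x'" and P: "primitive7 x" "primitive7 x'"
    and p6: "x 6 > 0" "x' 6 > 0" and lm: "l > 0" "m > 0"
    and e3: "l * x 3 = m * x' 3" and e5: "l * x 5 = m * x' 5" and e6: "l * x 6 = m * x' 6"
  shows "x = x'"
proof -
  note f = onS_facts[OF S(1)] and f' = onS_facts[OF S(2)]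
  have U: "l * x 6 \<noteq> 0" using p6 lm by simp
  have k2: "l * x 2 = m * x' 2"
  proof (rule cancel_eq[OF U])
    show "l * x 6 * (l * x 2) = (l * x 3)^2" using f(2) by algebra
    have "m * x' 6 * (m * x' 2) = (m * x' 3)^2" using f'(2) by algebra
    then show "l * x 6 * (m * x' 2) = (l * x 3)^2" using e3 e6 by simp
  qed
  have k4: "l * x 4 = m * x' 4"
  proof (rule cancel_eq[OF U])
    show "l * x 6 * (l * x 4) = (l * x 5)^2" using f(3) by algebra
    have "m * x' 6 * (m * x' 4) = (m * x' 5)^2" using f'(3) by algebra
    then show "l * x 6 * (m * x' 4) = (l * x 5)^2" using e5 e6 by simp
  qed
  have k1: "l * x 1 = m * x' 1"
  proof (rule cancel_eq[OF U])
    show "l * x 6 * (l * x 1) = (l * x 3) * (l * x 5)" using f(1) by algebra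
    have "m * x' 6 * (m * x' 1) = (m * x' 3) * (m * x' 5)" using f'(1) by algebra
    then show "l * x 6 * (m * x' 1) = (l * x 3) * (l * x 5)" using e3 e5 e6 by simp
  qed
  have U2: "(l * x 6)^2 \<noteq> 0" using U by simp
  have k7: "l * x 7 = m * x' 7"
  proof (rule cancel_eq[OF U2])
    show "(l * x 6)^2 * (l * x 7) = - ((l * x 3) * (l * x 5) * (l * x 3 + l * x 5))"
      using f(1) f(4) by algebra
    have "(m * x' 6)^2 * (m * x' 7) = - ((m * x' 3) * (m * x' 5) * (m * x' 3 + m * x' 5))"
      using f'(1) f'(4) by algebra
    then show "(l * x 6)^2 * (m * x' 7) = - ((l * x 3) * (l * x 5) * (l * x 3 + l * x 5))"
      using e3 e5 e6 by simp
  qed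
  have key: "\<And>i. l * x i = m * x' i"
  proof -
    fix i :: nat
    show "l * x i = m * x' i"
    proof (cases "i \<in> {1..7}")
      case True
      then have "i = 1 \<or> i = 2 \<or> i = 3 \<or> i = 4 \<or> i = 5 \<or> i = 6 \<or> i = 7" by auto
      then show ?thesis using k1 k2 e3 k4 e5 e6 k7 by auto
    next
      case False
      then show ?thesis using V unfolding vec7_def by simp
    qed
  qed
  define g where "g = gcd l m"
  have g0: "g \<noteq> 0" using lm unfolding g_def by simp
  obtain l' m' where lm': "l = l' * g" "m = m' * g" "coprime l' m'"
    using gcd_coprime_exists[of l m] g0 unfolding g_def by blast
  have gp: "g > 0" using g0 unfolding g_def by (simp add: order_le_neq_trans)
  have l'p: "l' > 0" using lm(1) lm'(1) gp by (metis zero_less_mult_pos2)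
  have m'p: "m' > 0" using lm(2) lm'(2) gp by (metis zero_less_mult_pos2)
  have key': "\<And>i. l' * x i = m' * x' i"
  proof -
    fix i
    have "g * (l' * x i) = g * (m' * x' i)"
      using key[of i] lm'(1,2) by (simp add: algebra_simps)
    then show "l' * x i = m' * x' i" using g0 by simp
  qed
  have "\<forall>i\<in>{1..7}. m' dvd x i"
  proof
    fix i :: nat
    have "m' dvd l' * x i" using key'[of i] by simp
    then show "m' dvd x i" using lm'(3) by (simp add: coprime_commute coprime_dvd_mult_right_iff)
  qed
  then have "\<bar>m'\<bar> = 1" using P(1) unfolding primitive7_def by blast
  then have m1: "m' = 1" using m'p by simp
  have "\<forall>i\<in>{1..7}. l' dvd x' i"
  proof
    fix i :: nat
    have "l' dvd m' * x' i" using key'[of i] by (metis dvd_triv_left)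
    then show "l' dvd x' i" using lm'(3) by (simp add: coprime_dvd_mult_right_iff)
  qed
  then have "\<bar>l'\<bar> = 1" using P(2) unfolding primitive7_def by blast
  then have l1: "l' = 1" using l'p by simp
  show "x = x'"
  proof
    fix i show "x i = x' i" using key'[of i] l1 m1 by simp
  qed
qed



definition Ft :: "int \<times> int \<times> int \<times> int \<times> int \<times> int \<times> int \<Rightarrow> nat \<Rightarrow> int" where
  "Ft t = (case t of (s0, s1, s2, s3, y1, y2, y3) \<Rightarrow> Fv s0 s1 s2 s3 y1 y2 y3)"

definition Gx :: "(nat \<Rightarrow> int) \<Rightarrow> int \<times> int \<times> int \<times> int \<times> int \<times> int \<times> int" where
  "Gx x = (let d = gcd (x 3) (gcd (x 5) (x 6)) in Gabc (x 3 div d) (x 5 div d) (x 6 div d))"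

definition Qset :: "real \<Rightarrow> (nat \<Rightarrow> int) set" where
  "Qset B = {x. vec7 x \<and> primitive7 x \<and> on_S x \<and> \<not> on_lines x \<and> real_of_int (height7 x) \<le> B
     \<and> x 6 > 0 \<and> x 3 > 0}"

lemma Fv_in_Q:
  assumes "good s0 s1 s2 s3 y1 y2 y3" "real_of_int (Psi s0 s1 s2 s3 y1 y2 y3) \<le> B"
  shows "Fv s0 s1 s2 s3 y1 y2 y3 \<in> Qset B"
proof -
  note A = assms(1)[unfolded good_def]
  let ?x = "Fv s0 s1 s2 s3 y1 y2 y3"
  have x6: "?x 6 > 0" unfolding Fv_simps using A by simp
  have x3: "?x 3 > 0" unfolding Fv_simps using A by simp
  have "\<not> on_lines ?x" using x6 unfolding on_lines_def by auto
  moreover have "on_S ?x" using Fv_onS[of s1 y1 s2 y2 s3 y3 s0] A by simp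
  moreover have "primitive7 ?x" using Fv_primitive[of s0 s1 s2 s3 y1 y2 y3] A by simp
  moreover have "real_of_int (height7 ?x) \<le> B" using Fv_height[of s0 s1 s2 s3 y1 y2 y3 B] assms(2) by simp
  ultimately show ?thesis unfolding Qset_def using Fv_vec7 x6 x3 by simp
qed

lemma Gx_Fv:
  assumes "good s0 s1 s2 s3 y1 y2 y3"
  shows "Gx (Fv s0 s1 s2 s3 y1 y2 y3) = (s0, s1, s2, s3, y1, y2, y3)"
proof -
  note A = assms[unfolded good_def]
  let ?x = "Fv s0 s1 s2 s3 y1 y2 y3"
  define lam where "lam = s0^2*s1*s2*s3"
  have lp: "lam > 0" unfolding lam_def using A by simp
  have e3: "?x 3 = lam * (s1*y1)" unfolding Fv_simps lam_def by algebra
  have e5: "?x 5 = lam * (- (s2*y2))" unfolding Fv_simps lam_def by algebra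
  have e6: "?x 6 = lam * (s0*s1*s2*s3)" unfolding Fv_simps lam_def by algebra
  have "gcd (?x 3) (gcd (?x 5) (?x 6)) = lam * gcd (s1*y1) (gcd (- (s2*y2)) (s0*s1*s2*s3))"
    unfolding e3 e5 e6 using lp by (simp add: gcd_mult_pos)
  then have d: "gcd (?x 3) (gcd (?x 5) (?x 6)) = lam" using good_triple(1)[OF assms] by simp
  have q: "\<And>u. lam * u div lam = u" using lp by simp
  show ?thesis unfolding Gx_def Let_def d unfolding e3 e5 e6 q using good_triple(2)[OF assms] .
qed

lemma Gx_props:
  assumes "x \<in> Qset B"
  shows "Gx x \<in> count_set B" "Ft (Gx x) = x"
proof -
  have V: "vec7 x" "primitive7 x" "on_S x" "real_of_int (height7 x) \<le> B" "x 6 > 0" "x 3 > 0"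
    using assms unfolding Qset_def by auto
  define d where "d = gcd (x 3) (gcd (x 5) (x 6))"
  have dp: "d > 0" unfolding d_def using V(5) by (simp add: order_le_neq_trans)
  define a where "a = x 3 div d"
  define b where "b = x 5 div d"
  define c where "c = x 6 div d"
  have "d dvd x 3" unfolding d_def by simp
  moreover have "d dvd x 5" using gcd_dvd1[of "x 5" "x 6"] gcd_dvd2[of "x 3" "gcd (x 5) (x 6)"]
    unfolding d_def by (rule dvd_trans[rotated])
  moreover have "d dvd x 6" using gcd_dvd2[of "x 5" "x 6"] gcd_dvd2[of "x 3" "gcd (x 5) (x 6)"]
    unfolding d_def by (rule dvd_trans[rotated])
  ultimately have "d dvd x 3" "d dvd x 5" "d dvd x 6" by auto
  then have xa: "x 3 = d * a" and xb: "x 5 = d * b" and xc: "x 6 = d * c"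
    unfolding a_def b_def c_def by simp_all
  have "d = gcd (d*a) (gcd (d*b) (d*c))" by (subst (1) d_def) (simp only: xa xb xc)
  also have "\<dots> = d * gcd a (gcd b c)" using dp by (simp add: gcd_mult_pos)
  finally have "d = d * gcd a (gcd b c)" .
  then have g: "gcd a (gcd b c) = 1" using dp by simp
  have cp: "c > 0" using xc V(5) dp by (simp add: zero_less_mult_iff)
  have ap: "a > 0" using xa V(6) dp by (simp add: zero_less_mult_iff)
  obtain s0 s1 s2 s3 y1 y2 y3 where G: "Gabc a b c = (s0, s1, s2, s3, y1, y2, y3)"
    "good s0 s1 s2 s3 y1 y2 y3" "c = s0*s1*s2*s3" "a = s1*y1" "b = - (s2*y2)"
    by (rule Gabc_props[OF g cp ap])
  have Gx: "Gx x = (s0, s1, s2, s3, y1, y2, y3)"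
    unfolding Gx_def Let_def d_def[symmetric] a_def[symmetric] b_def[symmetric] c_def[symmetric] G(1) ..
  let ?x = "Fv s0 s1 s2 s3 y1 y2 y3"
  note A = G(2)[unfolded good_def]
  define lam where "lam = s0^2*s1*s2*s3"
  have lp: "lam > 0" unfolding lam_def using A by simp
  have e3: "?x 3 = lam * a" unfolding Fv_simps lam_def G(4) by algebra
  have e5: "?x 5 = lam * b" unfolding Fv_simps lam_def G(5) by algebra
  have e6: "?x 6 = lam * c" unfolding Fv_simps lam_def G(3) by algebra
  have S': "on_S ?x" using Fv_onS[of s1 y1 s2 y2 s3 y3 s0] A by simp
  have P': "primitive7 ?x" using Fv_primitive[of s0 s1 s2 s3 y1 y2 y3] A by simp
  have x6': "?x 6 > 0" unfolding Fv_simps using A by simp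
  have eq: "x = ?x"
  proof (rule prop_eq[OF V(3) S' V(1) Fv_vec7 V(2) P' V(5) x6' lp dp])
    show "lam * x 3 = d * ?x 3" unfolding e3 xa by (simp only: ac_simps)
    show "lam * x 5 = d * ?x 5" unfolding e5 xb by (simp only: ac_simps)
    show "lam * x 6 = d * ?x 6" unfolding e6 xc by (simp only: ac_simps)
  qed
  show "Ft (Gx x) = x" unfolding Gx Ft_def using eq by simp
  have "real_of_int (Psi s0 s1 s2 s3 y1 y2 y3) \<le> B"
    using Fv_height[of s0 s1 s2 s3 y1 y2 y3 B] V(4) eq by simp
  then show "Gx x \<in> count_set B" unfolding Gx count_set_alt using G(2) by simp
qed

lemma bij_main: "bij_betw Ft (count_set B) (Qset B)"
proof (rule bij_betw_byWitness[where f' = Gx])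
  show "\<forall>a\<in>count_set B. Gx (Ft a) = a"
    unfolding count_set_alt Ft_def by (auto simp: Gx_Fv)
  show "\<forall>a'\<in>Qset B. Ft (Gx a') = a'" using Gx_props by blast
  show "Ft ` count_set B \<subseteq> Qset B"
    unfolding count_set_alt Ft_def by (auto simp: Fv_in_Q)
  show "Gx ` Qset B \<subseteq> count_set B" using Gx_props by blast
qed



definition Pset :: "real \<Rightarrow> (nat \<Rightarrow> int) set" where
  "Pset B = {x. vec7 x \<and> primitive7 x \<and> on_S x \<and> \<not> on_lines x \<and> real_of_int (height7 x) \<le> B}"

definition Pp :: "real \<Rightarrow> (nat \<Rightarrow> int) set" where
  "Pp B = {x \<in> Pset B. x 6 > 0}"

lemma neg_in_Pset: "x \<in> Pset B \<Longrightarrow> - x \<in> Pset B"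
  unfolding Pset_def using neg_inv by auto

lemma N_U_Pp: "N_U B = card (Pp B)"
proof -
  have cls: "{{x, -x} | x. vec7 x \<and> primitive7 x \<and> on_S x \<and> \<not> on_lines x
                            \<and> real_of_int (height7 x) \<le> B} = (\<lambda>x. {x, -x}) ` Pp B"
  proof (intro equalityI subsetI)
    fix X assume "X \<in> {{x, -x} | x. vec7 x \<and> primitive7 x \<and> on_S x \<and> \<not> on_lines x
                            \<and> real_of_int (height7 x) \<le> B}"
    then obtain x where X: "X = {x, -x}" and xP: "x \<in> Pset B" unfolding Pset_def by blast
    have "x 6 \<noteq> 0" using xP x6_nonzero unfolding Pset_def by blast
    then show "X \<in> (\<lambda>x. {x, -x}) ` Pp B"
    proof (cases "x 6 > 0")
      case True
      then show ?thesis using X xP unfolding Pp_def by blast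
    next
      case False
      then have "(- x) 6 > 0" using \<open>x 6 \<noteq> 0\<close> by simp
      moreover have "X = {- x, - (- x)}" using X by auto
      ultimately show ?thesis using neg_in_Pset[OF xP] unfolding Pp_def by blast
    qed
  next
    fix X assume "X \<in> (\<lambda>x. {x, -x}) ` Pp B"
    then show "X \<in> {{x, -x} | x. vec7 x \<and> primitive7 x \<and> on_S x \<and> \<not> on_lines x
                            \<and> real_of_int (height7 x) \<le> B}" unfolding Pp_def Pset_def by blast
  qed
  have inj: "inj_on (\<lambda>x. {x, -x}) (Pp B)"
  proof (rule inj_onI)
    fix x y assume xy: "x \<in> Pp B" "y \<in> Pp B" "{x, -x} = {y, -y}"
    show "x = y"
    proof (rule ccontr)
      assume "x \<noteq> y"
      then have "x = - y" using xy(3) by (metis doubleton_eq_iff)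
      then show False using xy(1,2) unfolding Pp_def by auto
    qed
  qed
  show ?thesis unfolding N_U_def cls using card_image[OF inj] by simp
qed

lemma finite_bounded: "finite {x. vec7 x \<and> (\<forall>i\<in>{1..7}. \<bar>x i\<bar> \<le> (K::int))}"
proof (rule finite_imageD)
  let ?A = "{x. vec7 x \<and> (\<forall>i\<in>{1..7}. \<bar>x i\<bar> \<le> K)}"
  let ?f = "\<lambda>x::nat\<Rightarrow>int. map x [1..<8]"
  have "?f ` ?A \<subseteq> {xs. set xs \<subseteq> {-K..K} \<and> length xs = 7}"
  proof
    fix xs assume "xs \<in> ?f ` ?A"
    then obtain x where xA: "x \<in> ?A" and xs: "xs = ?f x" by blast
    have "\<And>i. i \<in> set [1..<8] \<Longrightarrow> x i \<in> {-K..K}"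
    proof -
      fix i :: nat assume "i \<in> set [1..<8]"
      then have "i \<in> {1..7}" by auto
      then have "\<bar>x i\<bar> \<le> K" using xA by blast
      then show "x i \<in> {-K..K}" by (simp add: abs_le_iff)
    qed
    then show "xs \<in> {xs. set xs \<subseteq> {-K..K} \<and> length xs = 7}" unfolding xs by auto
  qed
  then show "finite (?f ` ?A)" using finite_lists_length_eq[of "{-K..K}" 7]
    by (meson finite_atLeastAtMost_int finite_subset finite_lists_length_eq)
  show "inj_on ?f ?A"
  proof (rule inj_onI)
    fix x y assume "x \<in> ?A" "y \<in> ?A" "?f x = ?f y"
    then have v: "vec7 x" "vec7 y" and e: "\<forall>i\<in>set [1..<8]. x i = y i" by (auto simp: map_eq_conv)
    show "x = y"
    proof
      fix i
      show "x i = y i"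
      proof (cases "i \<in> {1..7}")
        case True then show ?thesis using e by auto
      next
        case False then show ?thesis using v unfolding vec7_def by simp
      qed
    qed
  qed
qed

lemma finite_Pp: "finite (Pp B)"
proof (rule finite_subset[OF _ finite_bounded[of "\<lfloor>B\<rfloor>"]])
  show "Pp B \<subseteq> {x. vec7 x \<and> (\<forall>i\<in>{1..7}. \<bar>x i\<bar> \<le> \<lfloor>B\<rfloor>)}"
  proof
    fix x assume "x \<in> Pp B"
    then have "vec7 x" "\<forall>i\<in>{1..7}. real_of_int \<bar>x i\<bar> \<le> B"
      unfolding Pp_def Pset_def height_le by auto
    then show "x \<in> {x. vec7 x \<and> (\<forall>i\<in>{1..7}. \<bar>x i\<bar> \<le> \<lfloor>B\<rfloor>)}"
      by (auto simp: le_floor_iff)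
  qed
qed

lemma Q_Pp: "Qset B = {x \<in> Pp B. x 3 > 0}"
  unfolding Qset_def Pp_def Pset_def by auto

lemma sigQ: "sig ` Qset B = {x \<in> Pp B. x 3 < 0}"
proof (intro equalityI subsetI)
  fix y assume "y \<in> sig ` Qset B"
  then obtain x where "x \<in> Qset B" "y = sig x" by blast
  then show "y \<in> {x \<in> Pp B. x 3 < 0}" unfolding Qset_def Pp_def Pset_def using sig_inv[of x] by auto
next
  fix y assume h: "y \<in> {x \<in> Pp B. x 3 < 0}"
  have "sig y \<in> Qset B" using h unfolding Qset_def Pp_def Pset_def using sig_inv[of y] by auto
  moreover have "y = sig (sig y)" by (simp add: sig_sig)
  ultimately show "y \<in> sig ` Qset B" by blast
qed

lemma card_split: "card (Pp B) = 2 * card (Qset B) + card {x \<in> Pp B. x 3 = 0}"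
proof -
  have inj: "inj_on sig (Qset B)" by (metis inj_onI sig_sig)
  have U: "Pp B = (Qset B \<union> sig ` Qset B) \<union> {x \<in> Pp B. x 3 = 0}"
    unfolding sigQ unfolding Q_Pp by auto
  have f1: "finite (Qset B)" and f2: "finite (sig ` Qset B)" and f3: "finite {x \<in> Pp B. x 3 = 0}"
    unfolding sigQ unfolding Q_Pp using finite_Pp by auto
  have d1: "Qset B \<inter> sig ` Qset B = {}" and d2: "(Qset B \<union> sig ` Qset B) \<inter> {x \<in> Pp B. x 3 = 0} = {}"
    unfolding sigQ unfolding Q_Pp by auto
  have c1: "card (Qset B \<union> sig ` Qset B) = card (Qset B) + card (sig ` Qset B)"
    by (rule card_Un_disjoint[OF f1 f2 d1])
  have c2: "card ((Qset B \<union> sig ` Qset B) \<union> {x \<in> Pp B. x 3 = 0}) =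
      card (Qset B \<union> sig ` Qset B) + card {x \<in> Pp B. x 3 = 0}"
    by (rule card_Un_disjoint[OF _ f3 d2]) (use f1 f2 in simp)
  have "card (Pp B) = card (Qset B) + card (sig ` Qset B) + card {x \<in> Pp B. x 3 = 0}"
    by (subst U) (simp only: c2 c1)
  then show ?thesis using card_image[OF inj] by simp
qed



lemma sign_lemma: "(v::int) = P \<or> v = - P \<Longrightarrow> P \<ge> 0 \<Longrightarrow> v = (if v \<ge> 0 then P else - P)"
  by auto

lemma E_struct:
  assumes S: "on_S x" and P: "primitive7 x" and p6: "x 6 > 0" and z3: "x 3 = 0"
  shows "x 1 = 0" "x 2 = 0" "x 7 = 0" "x 4 \<ge> 0" "(gcd (x 4) (x 5))^2 = x 4"
    "(gcd (x 5) (x 6))^2 = x 6"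
    "x 5 = gcd (x 4) (x 5) * (if x 5 \<ge> 0 then gcd (x 5) (x 6) else - gcd (x 5) (x 6))"
proof -
  note f = onS_facts[OF S]
  have e: "x 1 ^ 2 = x 2 * x 4" using S unfolding on_S_def by simp
  show x2: "x 2 = 0" using f(2) z3 p6 by simp
  show x1: "x 1 = 0" using e x2 by simp
  show x7: "x 7 = 0" using f(4) x1 p6 by simp
  have m: "x 4 * x 6 = x 5 ^ 2" using f(3) .
  show x4: "x 4 \<ge> 0"
  proof -
    have "x 4 * x 6 \<ge> 0" unfolding m by simp
    then show ?thesis using p6 by (simp add: zero_le_mult_iff)
  qed
  define d where "d = gcd (x 4) (x 6)"
  have "d * d dvd x 4 * x 6" unfolding d_def by (intro mult_dvd_mono) auto
  then have "d ^ 2 dvd x 5 ^ 2" unfolding m by (simp add: power2_eq_square)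
  then have d5: "d dvd x 5" using pow_divides_pow_iff[of 2 d "x 5"] by simp
  have "\<forall>i\<in>{1..7}. d dvd x i" unfolding ball17 using x1 x2 z3 x7 d5 unfolding d_def by simp
  then have "\<bar>d\<bar> = 1" using P unfolding primitive7_def by blast
  then have g46: "gcd (x 4) (x 6) = 1" unfolding d_def by simp
  have g1: "(gcd (x 4) (x 5))^2 = x 4"
  proof -
    have "(gcd (x 4) (x 5))^2 = gcd (x 4 ^ 2) (x 5 ^ 2)" by (simp add: gcd_exp)
    also have "\<dots> = gcd (x 4 * x 4) (x 4 * x 6)" unfolding m[symmetric] by (simp add: power2_eq_square)
    also have "\<dots> = \<bar>x 4\<bar> * gcd (x 4) (x 6)" by (simp add: gcd_mult_distrib_int)
    finally show ?thesis using g46 x4 by simp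
  qed
  then show "(gcd (x 4) (x 5))^2 = x 4" .
  have g2: "(gcd (x 5) (x 6))^2 = x 6"
  proof -
    have "(gcd (x 5) (x 6))^2 = gcd (x 5 ^ 2) (x 6 ^ 2)" by (simp add: gcd_exp)
    also have "\<dots> = gcd (x 6 * x 4) (x 6 * x 6)" unfolding m[symmetric] by (simp add: power2_eq_square ac_simps)
    also have "\<dots> = \<bar>x 6\<bar> * gcd (x 4) (x 6)" by (simp add: gcd_mult_distrib_int[symmetric])
    finally show ?thesis using g46 p6 by simp
  qed
  then show "(gcd (x 5) (x 6))^2 = x 6" .
  have "x 5 ^ 2 = (gcd (x 4) (x 5) * gcd (x 5) (x 6))^2"
    unfolding power_mult_distrib g1 g2 m[symmetric] ..
  then have "x 5 = gcd (x 4) (x 5) * gcd (x 5) (x 6) \<or> x 5 = - (gcd (x 4) (x 5) * gcd (x 5) (x 6))"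
    using power2_eq_iff by blast
  moreover have "gcd (x 4) (x 5) * gcd (x 5) (x 6) \<ge> 0" by simp
  ultimately have "x 5 = (if x 5 \<ge> 0 then gcd (x 4) (x 5) * gcd (x 5) (x 6) else - (gcd (x 4) (x 5) * gcd (x 5) (x 6)))"
    using sign_lemma by blast
  then show "x 5 = gcd (x 4) (x 5) * (if x 5 \<ge> 0 then gcd (x 5) (x 6) else - gcd (x 5) (x 6))"
    by (simp split: if_splits)
qed

definition hE :: "(nat \<Rightarrow> int) \<Rightarrow> int \<times> int" where
  "hE x = (gcd (x 4) (x 5), if x 5 \<ge> 0 then gcd (x 5) (x 6) else - gcd (x 5) (x 6))"

lemma sqrt_floor_bound:
  fixes g :: int
  assumes "g \<ge> 0" "real_of_int (g^2) \<le> B"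
  shows "g \<le> \<lfloor>sqrt B\<rfloor>"
proof -
  have "real_of_int g ^ 2 \<le> B" using assms(2) by simp
  then have "real_of_int g \<le> sqrt B" using real_le_rsqrt by blast
  then show ?thesis by (simp add: le_floor_iff)
qed

lemma E_bound:
  assumes B: "B \<ge> 1"
  shows "real (card {x \<in> Pp B. x 3 = 0}) \<le> 6 * B"
proof -
  let ?E = "{x \<in> Pp B. x 3 = 0}"
  define r where "r = \<lfloor>sqrt B\<rfloor>"
  have inj: "inj_on hE ?E"
  proof (rule inj_onI)
    fix x y assume xE: "x \<in> ?E" and yE: "y \<in> ?E" and h: "hE x = hE y"
    have Vx: "vec7 x" "on_S x" "primitive7 x" "x 6 > 0" "x 3 = 0" using xE unfolding Pp_def Pset_def by auto
    have Vy: "vec7 y" "on_S y" "primitive7 y" "y 6 > 0" "y 3 = 0" using yE unfolding Pp_def Pset_def by auto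
    note sx = E_struct[OF Vx(2,3,4,5)] and sy = E_struct[OF Vy(2,3,4,5)]
    have h1: "gcd (x 4) (x 5) = gcd (y 4) (y 5)" using h unfolding hE_def by simp
    have h2: "(if x 5 \<ge> 0 then gcd (x 5) (x 6) else - gcd (x 5) (x 6)) =
              (if y 5 \<ge> 0 then gcd (y 5) (y 6) else - gcd (y 5) (y 6))" using h unfolding hE_def by simp
    have q: "\<And>z::nat\<Rightarrow>int. z 6 > 0 \<Longrightarrow> (if z 5 \<ge> 0 then gcd (z 5) (z 6) else - gcd (z 5) (z 6))^2 = (gcd (z 5) (z 6))^2"
      by simp
    have e4: "x 4 = y 4"
    proof -
      have "x 4 = (gcd (x 4) (x 5))^2" by (rule sx(5)[symmetric])
      also have "\<dots> = (gcd (y 4) (y 5))^2" unfolding h1 ..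
      also have "\<dots> = y 4" by (rule sy(5))
      finally show ?thesis .
    qed
    have e6: "x 6 = y 6"
    proof -
      have "x 6 = (gcd (x 5) (x 6))^2" by (rule sx(6)[symmetric])
      also have "\<dots> = (if x 5 \<ge> 0 then gcd (x 5) (x 6) else - gcd (x 5) (x 6))^2" by (rule q[of x, OF Vx(4), symmetric])
      also have "\<dots> = (if y 5 \<ge> 0 then gcd (y 5) (y 6) else - gcd (y 5) (y 6))^2" unfolding h2 ..
      also have "\<dots> = (gcd (y 5) (y 6))^2" by (rule q[of y, OF Vy(4)])
      also have "\<dots> = y 6" by (rule sy(6))
      finally show ?thesis .
    qed
    have e5: "x 5 = y 5"
    proof -
      have "x 5 = gcd (x 4) (x 5) * (if x 5 \<ge> 0 then gcd (x 5) (x 6) else - gcd (x 5) (x 6))" by (rule sx(7))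
      also have "\<dots> = gcd (y 4) (y 5) * (if y 5 \<ge> 0 then gcd (y 5) (y 6) else - gcd (y 5) (y 6))" unfolding h1 h2 ..
      also have "\<dots> = y 5" by (rule sy(7)[symmetric])
      finally show ?thesis .
    qed
    show "x = y"
    proof
      fix i
      show "x i = y i"
      proof (cases "i \<in> {1..7}")
        case True
        then have "i = 1 \<or> i = 2 \<or> i = 3 \<or> i = 4 \<or> i = 5 \<or> i = 6 \<or> i = 7" by auto
        then show ?thesis using sx sy e4 e5 e6 Vx(5) Vy(5) by auto
      next
        case False then show ?thesis using Vx(1) Vy(1) unfolding vec7_def by simp
      qed
    qed
  qed
  have img: "hE ` ?E \<subseteq> {0..r} \<times> {-r..r}"
  proof
    fix p assume "p \<in> hE ` ?E"
    then obtain x where xE: "x \<in> ?E" and p: "p = hE x" by blast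
    have Vx: "on_S x" "primitive7 x" "x 6 > 0" "x 3 = 0" "real_of_int (height7 x) \<le> B"
      using xE unfolding Pp_def Pset_def by auto
    note sx = E_struct[OF Vx(1-4)]
    have b: "\<forall>i\<in>{1..7}. real_of_int \<bar>x i\<bar> \<le> B" using Vx(5) unfolding height_le .
    have b4: "real_of_int (x 4) \<le> B" using b sx(4) unfolding ball17 by simp
    have b6: "real_of_int (x 6) \<le> B" using b Vx(3) unfolding ball17 by simp
    have r1: "gcd (x 4) (x 5) \<le> r" unfolding r_def
      by (rule sqrt_floor_bound) (use sx(5) b4 in auto)
    have r2: "gcd (x 5) (x 6) \<le> r" unfolding r_def
      by (rule sqrt_floor_bound) (use sx(6) b6 in auto)
    show "p \<in> {0..r} \<times> {-r..r}" 
    proof -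
      have gz: "0 \<le> gcd (x 5) (x 6)" "0 \<le> gcd (x 4) (x 5)" by simp_all
      show ?thesis unfolding p hE_def mem_Times_iff fst_conv snd_conv atLeastAtMost_iff
        using r1 r2 gz by (smt (verit))
    qed
  qed
  have "card ?E = card (hE ` ?E)" using card_image[OF inj] by simp
  also have "\<dots> \<le> card ({0..r} \<times> {-r..r})" by (rule card_mono[OF _ img]) simp
  also have "\<dots> = nat (r + 1) * nat (2 * r + 1)" by (simp add: card_cartesian_product)
  finally have c: "card ?E \<le> nat (r + 1) * nat (2 * r + 1)" .
  have sB: "sqrt B \<ge> 1" using B by simp
  have r1: "r \<ge> 1" unfolding r_def using sB by (simp add: le_floor_iff)
  define R where "R = real_of_int r"
  have R1: "R \<ge> 1" unfolding R_def using r1 by simp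
  have "R \<le> sqrt B" unfolding R_def r_def by simp
  then have "R^2 \<le> (sqrt B)^2" using R1 by (intro power_mono) auto
  also have "(sqrt B)^2 = B" using B by simp
  finally have "R^2 \<le> B" .
  have "real (nat (r + 1) * nat (2 * r + 1)) = (R + 1) * (2 * R + 1)"
    unfolding R_def using r1 by simp
  also have "\<dots> = 2 * R^2 + 3 * R + 1" by (simp add: algebra_simps power2_eq_square)
  also have "\<dots> \<le> 6 * B"
  proof -
    have "R * 1 \<le> R * R" by (rule mult_left_mono) (use R1 in simp_all)
    then have "R \<le> R^2" by (simp add: power2_eq_square)
    then show ?thesis using \<open>R^2 \<le> B\<close> B by linarith
  qed
  finally show ?thesis using c by (meson of_nat_le_iff order_trans)
qed

theorem lemma3p3:
  shows "\<exists>C::real. \<forall>B::real. B \<ge> 1 \<longrightarrow>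
           \<bar>real (N_U B) - 2 * real (card (count_set B))\<bar> \<le> C * B"
proof (intro exI allI impI)
  fix B :: real assume B: "B \<ge> 1"
  have "card (count_set B) = card (Qset B)" using bij_betw_same_card[OF bij_main] .
  then have "N_U B = 2 * card (count_set B) + card {x \<in> Pp B. x 3 = 0}"
    using N_U_Pp card_split by simp
  then have "real (N_U B) - 2 * real (card (count_set B)) = real (card {x \<in> Pp B. x 3 = 0})"
    by simp
  then show "\<bar>real (N_U B) - 2 * real (card (count_set B))\<bar> \<le> 6 * B"
    using E_bound[OF B] by simp
qed


end
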